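(* Let $G = K_m \otimes K_n$ with $m \geq 3$ and $n \geq 2m-1$. Then $\dim(G) = n-1$.
   Context: $K_r$ is the complete graph on $r$ vertices. The tensor product $G\otimes H$ has vertex set $V(G)\times V(H)$, with $(u,v)$ adjacent to $(x,y)$ iff $ux\in E(G)$ and $vy\in E(H)$. For a connected graph and an ordered set $W=\{w_1,\dots,w_k\}$ of vertices, $r(v\mid W)=(d(v,w_1),\dots,d(v,w_k))$; $W$ is resolving if distinct vertices have distinct representations; $\dim(G)$ is the minimum size of a resolving set. *)

theory Defs
  imports Main
begin

definition is_walk :: "'a set \<Rightarrow> ('a \<Rightarrow> 'a \<Rightarrow> bool) \<Rightarrow> 'a list \<Rightarrow> bool" where
  "is_walk V E p \<longleftrightarrow> p \<noteq> [] \<and> set p \<subseteq> V \<and> (\<forall>i. Suc i < length p \<longrightarrow> E (p ! i) (p ! Suc i))"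

definition walk_betw :: "'a set \<Rightarrow> ('a \<Rightarrow> 'a \<Rightarrow> bool) \<Rightarrow> 'a \<Rightarrow> 'a \<Rightarrow> 'a list \<Rightarrow> bool" where
  "walk_betw V E u v p \<longleftrightarrow> is_walk V E p \<and> hd p = u \<and> last p = v"

definition connected_graph :: "'a set \<Rightarrow> ('a \<Rightarrow> 'a \<Rightarrow> bool) \<Rightarrow> bool" where
  "connected_graph V E \<longleftrightarrow> V \<noteq> {} \<and> (\<forall>u\<in>V. \<forall>v\<in>V. \<exists>p. walk_betw V E u v p)"

(* distance = number of edges of a shortest walk (meaningful in connected graphs) *)
definition gdist :: "'a set \<Rightarrow> ('a \<Rightarrow> 'a \<Rightarrow> bool) \<Rightarrow> 'a \<Rightarrow> 'a \<Rightarrow> nat" where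
  "gdist V E u v = (LEAST k. \<exists>p. walk_betw V E u v p \<and> length p = Suc k)"

definition resolving :: "'a set \<Rightarrow> ('a \<Rightarrow> 'a \<Rightarrow> bool) \<Rightarrow> 'a set \<Rightarrow> bool" where
  "resolving V E W \<longleftrightarrow> W \<subseteq> V \<and>
     (\<forall>x\<in>V. \<forall>y\<in>V. x \<noteq> y \<longrightarrow> (\<exists>w\<in>W. gdist V E x w \<noteq> gdist V E y w))"

definition metric_dim :: "'a set \<Rightarrow> ('a \<Rightarrow> 'a \<Rightarrow> bool) \<Rightarrow> nat" where
  "metric_dim V E = (LEAST k. \<exists>W. resolving V E W \<and> card W = k)"

definition K_verts :: "nat \<Rightarrow> nat set" where "K_verts r = {0..<r}"
definition K_adj :: "nat \<Rightarrow> nat \<Rightarrow> bool" where "K_adj x y \<longleftrightarrow> x \<noteq> y"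

definition tensor_verts :: "'a set \<Rightarrow> 'b set \<Rightarrow> ('a \<times> 'b) set" where
  "tensor_verts V1 V2 = V1 \<times> V2"
definition tensor_adj :: "('a \<Rightarrow> 'a \<Rightarrow> bool) \<Rightarrow> ('b \<Rightarrow> 'b \<Rightarrow> bool) \<Rightarrow> ('a \<times> 'b) \<Rightarrow> ('a \<times> 'b) \<Rightarrow> bool" where
  "tensor_adj E1 E2 p q \<longleftrightarrow> E1 (fst p) (fst q) \<and> E2 (snd p) (snd q)"

end

theory Submission
  imports Defs
begin

lemma avoid2: "(3::nat) \<le> k \<Longrightarrow> \<exists>c<k. c \<noteq> p \<and> c \<noteq> q"
proof -
  assume "3 \<le> k"
  have "\<exists>c\<in>{0,1,2::nat}. c \<noteq> p \<and> c \<noteq> q" by auto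
  then show ?thesis using \<open>3 \<le> k\<close> by force
qed

lemma gdist_self: "u \<in> V \<Longrightarrow> gdist V E u u = 0"
  unfolding gdist_def
  by (rule Least_eq_0, rule exI[of _ "[u]"], simp add: walk_betw_def is_walk_def)

lemma walk1: "walk_betw V E u v p \<Longrightarrow> length p = Suc 0 \<Longrightarrow> u = v"
  unfolding walk_betw_def is_walk_def
  by (cases p) auto

lemma walk2: "walk_betw V E u v p \<Longrightarrow> length p = Suc (Suc 0) \<Longrightarrow> E u v"
proof -
  assume a: "walk_betw V E u v p" "length p = Suc (Suc 0)"
  then obtain x y where p: "p = [x,y]"
    by (metis Suc_length_conv length_0_conv)
  with a show ?thesis unfolding walk_betw_def is_walk_def
    by (metis One_nat_def Suc_1 last.simps lessI list.distinct(1) list.sel(1) nth_Cons_0 nth_Cons_Suc)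
qed

lemma gdist_adj: "u \<in> V \<Longrightarrow> v \<in> V \<Longrightarrow> u \<noteq> v \<Longrightarrow> E u v \<Longrightarrow> gdist V E u v = 1"
  unfolding gdist_def
proof (rule Least_equality)
  assume "u \<in> V" "v \<in> V" "E u v"
  then show "\<exists>p. walk_betw V E u v p \<and> length p = Suc 1"
    by (intro exI[of _ "[u,v]"]) (auto simp: walk_betw_def is_walk_def nth_Cons split: nat.splits)
next
  fix y assume "u \<noteq> v" "\<exists>p. walk_betw V E u v p \<and> length p = Suc y"
  then show "1 \<le> y" using walk1 by (metis One_nat_def less_one not_le)
qed

lemma gdist_two: "u \<in> V \<Longrightarrow> v \<in> V \<Longrightarrow> u \<noteq> v \<Longrightarrow> \<not> E u v \<Longrightarrow> c \<in> V \<Longrightarrow> E u c \<Longrightarrow> E c v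
   \<Longrightarrow> gdist V E u v = 2"
  unfolding gdist_def
proof (rule Least_equality)
  assume "u \<in> V" "v \<in> V" "c \<in> V" "E u c" "E c v"
  then show "\<exists>p. walk_betw V E u v p \<and> length p = Suc 2"
    by (intro exI[of _ "[u,c,v]"]) (auto simp: walk_betw_def is_walk_def nth_Cons split: nat.splits)
next
  fix y assume "u \<noteq> v" "\<not> E u v" "\<exists>p. walk_betw V E u v p \<and> length p = Suc y"
  then show "2 \<le> y" using walk1 walk2
    by (metis One_nat_def Suc_1 less_2_cases not_le)
qed

definition D :: "nat \<times> nat \<Rightarrow> nat \<times> nat \<Rightarrow> nat" where
  "D x w = (if x = w then 0 else if fst x \<noteq> fst w \<and> snd x \<noteq> snd w then 1 else 2)"

lemma gdist_D:
  assumes "m \<ge> 3" "n \<ge> 3" "x \<in> {0..<m} \<times> {0..<n}" "w \<in> {0..<m} \<times> {0..<n}"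
  shows "gdist ({0..<m} \<times> {0..<n}) (tensor_adj K_adj K_adj) x w = D x w"
proof -
  let ?V = "{0..<m} \<times> {0..<n}" and ?E = "tensor_adj K_adj K_adj"
  have E: "\<And>p q. ?E p q \<longleftrightarrow> fst p \<noteq> fst q \<and> snd p \<noteq> snd q"
    by (simp add: tensor_adj_def K_adj_def)
  obtain a b c d where x: "x = (a,b)" and w: "w = (c,d)" by (cases x, cases w)
  show ?thesis
  proof (cases "x = w")
    case True then show ?thesis using gdist_self assms by (simp add: D_def)
  next
    case ne: False
    show ?thesis
    proof (cases "a \<noteq> c \<and> b \<noteq> d")
      case True then show ?thesis using gdist_adj[of x ?V w ?E] assms ne x w E by (simp add: D_def)
    next
      case False
      obtain c' where c': "c' < m" "c' \<noteq> a" "c' \<noteq> c" using avoid2 assms(1) by blast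
      obtain d' where d': "d' < n" "d' \<noteq> b" "d' \<noteq> d" using avoid2 assms(2) by blast
      have "gdist ?V ?E x w = 2"
        by (rule gdist_two[of _ _ _ _ "(c',d')"]) (use assms ne x w E False c' d' in auto)
      then show ?thesis using ne False x w by (simp add: D_def)
    qed
  qed
qed

lemma lower:
  assumes "m \<ge> 3" "n \<ge> 3" "resolving ({0..<m} \<times> {0..<n}) (tensor_adj K_adj K_adj) W"
  shows "n - 1 \<le> card W"
proof -
  let ?V = "{0..<m} \<times> {0..<n}" and ?E = "tensor_adj K_adj K_adj"
  have WV: "W \<subseteq> ?V" and res: "\<And>x y. x \<in> ?V \<Longrightarrow> y \<in> ?V \<Longrightarrow> x \<noteq> y \<Longrightarrow> \<exists>w\<in>W. gdist ?V ?E x w \<noteq> gdist ?V ?E y w"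
    using assms(3) unfolding resolving_def by blast+
  have finW: "finite W" using WV finite_subset by blast
  let ?A = "{0..<n} - snd ` W"
  have sub: "\<And>b b'. b \<in> ?A \<Longrightarrow> b' \<in> ?A \<Longrightarrow> b = b'"
  proof (rule ccontr)
    fix b b' assume b: "b \<in> ?A" "b' \<in> ?A" "b \<noteq> b'"
    have x: "(0,b) \<in> ?V" "(0,b') \<in> ?V" using b assms(1) by auto
    then obtain w where w: "w \<in> W" "gdist ?V ?E (0,b) w \<noteq> gdist ?V ?E (0,b') w"
      using res b(3) by blast
    have wV: "w \<in> ?V" using w WV by auto
    have "snd w \<noteq> b" "snd w \<noteq> b'" using b w(1) by force+
    then have "D (0,b) w = D (0,b') w" by (auto simp: D_def)
    then show False using w gdist_D[OF assms(1,2)] x wV by simp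
  qed
  have "card ?A \<le> Suc 0" using sub by (subst card_le_Suc0_iff_eq) auto
  moreover have "card {0..<n} \<le> card ?A + card ({0..<n} \<inter> snd ` W)"
    by (metis Diff_Diff_Int card_Diff_subset_Int card_mono finite_atLeastLessThan Int_lower1 le_add_diff_inverse2
        finite_Int order_refl) 
  moreover have "card ({0..<n} \<inter> snd ` W) \<le> card W"
    by (meson card_image_le finW finite_imageI inf_le2 card_mono order_trans)
  ultimately show ?thesis by simp
qed

lemma upper:
  assumes m: "m \<ge> 3" and n: "n \<ge> 2 * m - 1"
  defines "W \<equiv> (\<lambda>j. (min (j div 2) (m - 1), j)) ` {0..<n-1}"
  shows "resolving ({0..<m} \<times> {0..<n}) (tensor_adj K_adj K_adj) W" and "card W = n - 1"
proof -
  let ?V = "{0..<m} \<times> {0..<n}" and ?E = "tensor_adj K_adj K_adj"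
  have n3: "n \<ge> 3" using m n by linarith
  have memW: "\<And>a j. (a, j) \<in> W \<longleftrightarrow> j < n - 1 \<and> a = min (j div 2) (m - 1)"
    unfolding W_def by auto
  have WV: "W \<subseteq> ?V" unfolding W_def using m by auto
  show "card W = n - 1" unfolding W_def by (subst card_image) (auto simp: inj_on_def)
  have row: "\<And>r c. r < m - 1 \<Longrightarrow> \<exists>j. j \<noteq> c \<and> (r, j) \<in> W"
  proof -
    fix r c assume r: "r < m - 1"
    have "2*r+1 < n - 1" using r n m by linarith
    have "(r, 2*r) \<in> W" "(r, 2*r+1) \<in> W" using r \<open>2*r+1 < n - 1\<close> by (auto simp: memW)
    show "\<exists>j. j \<noteq> c \<and> (r, j) \<in> W"
    proof (cases "c = 2*r")
      case True then show ?thesis using \<open>(r, 2*r+1) \<in> W\<close> by (intro exI[of _ "2*r+1"]) simp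
    next
      case False then show ?thesis using \<open>(r, 2*r) \<in> W\<close> by (intro exI[of _ "2*r"]) simp
    qed
  qed
  have key: "\<And>x y. x \<in> ?V \<Longrightarrow> y \<in> ?V \<Longrightarrow> x \<noteq> y \<Longrightarrow> \<exists>w\<in>W. D x w \<noteq> D y w"
  proof -
    fix x y assume x: "x \<in> ?V" and y: "y \<in> ?V" and xy: "x \<noteq> y"
    show "\<exists>w\<in>W. D x w \<noteq> D y w"
    proof (cases "x \<in> W \<or> y \<in> W")
      case True then show ?thesis using xy by (auto simp: D_def)
    next
      case False
      obtain a b a' b' where xe: "x = (a,b)" and ye: "y = (a',b')" by (cases x, cases y)
      show ?thesis
      proof (cases "a = a'")
        case True
        then have bb: "b \<noteq> b'" using xy xe ye by auto
        show ?thesis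
        proof (cases "b < n - 1")
          case True
          let ?w = "(min (b div 2) (m - 1), b)"
          have "?w \<in> W" using True by (simp add: memW)
          moreover have "D x ?w \<noteq> D y ?w" using False \<open>?w \<in> W\<close> xe ye bb \<open>a = a'\<close>
            by (auto simp: D_def)
          ultimately show ?thesis by blast
        next
          case nb: False
          then have "b' < n - 1" using bb x y xe ye by auto
          let ?w = "(min (b' div 2) (m - 1), b')"
          have "?w \<in> W" using \<open>b' < n - 1\<close> by (simp add: memW)
          moreover have "D x ?w \<noteq> D y ?w" using False \<open>?w \<in> W\<close> xe ye bb \<open>a = a'\<close>
            by (auto simp: D_def)
          ultimately show ?thesis by blast
        qed
      next
        case aa: False
        show ?thesis
        proof (cases "a < m - 1")
          case True
          then obtain j where j: "j \<noteq> b'" "(a, j) \<in> W" using row by blast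
          have "D x (a,j) \<noteq> D y (a,j)" using False j xe ye aa by (auto simp: D_def)
          then show ?thesis using j by blast
        next
          case na: False
          then have "a' < m - 1" using aa x y xe ye by auto
          then obtain j where j: "j \<noteq> b" "(a', j) \<in> W" using row by blast
          have "D x (a',j) \<noteq> D y (a',j)" using False j xe ye aa by (auto simp: D_def)
          then show ?thesis using j by blast
        qed
      qed
    qed
  qed
  show "resolving ?V ?E W"
    unfolding resolving_def
  proof (intro conjI WV ballI impI)
    fix x y assume x: "x \<in> ?V" and y: "y \<in> ?V" and xy: "x \<noteq> y"
    obtain w where "w \<in> W" "D x w \<noteq> D y w" using key[OF x y xy] by blast
    then show "\<exists>w\<in>W. gdist ?V ?E x w \<noteq> gdist ?V ?E y w"
      using gdist_D[OF m n3] x y WV by (metis subsetD)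
  qed
qed

theorem proposition3p3:
  fixes m n :: nat
  assumes "m \<ge> 3" and "n \<ge> 2 * m - 1"
  shows "metric_dim (tensor_verts (K_verts m) (K_verts n)) (tensor_adj K_adj K_adj) = n - 1"
proof -
  have n3: "n \<ge> 3" using assms by linarith
  show ?thesis
    unfolding metric_dim_def tensor_verts_def K_verts_def
  proof (rule Least_equality)
    show "\<exists>W. resolving ({0..<m} \<times> {0..<n}) (tensor_adj K_adj K_adj) W \<and> card W = n - 1"
      using upper[OF assms] by blast
  next
    fix y assume "\<exists>W. resolving ({0..<m} \<times> {0..<n}) (tensor_adj K_adj K_adj) W \<and> card W = y"
    then show "n - 1 \<le> y" using lower[OF assms(1) n3] by blast
  qed
qed

end
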